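(* Suppose the total preorder $\succeq$ on $\mathcal{Q}_b$ is monotonic, continuous in the $\mathcal{L}_1$-topology, and satisfies the dual independence axiom. Then there exists a bounded, nondecreasing, continuous function $w:[0,1]\to\mathbb{R}$ such that $$U(\Phi)=\int_0^1\Phi(p)\,dw(p)$$ (a Stieltjes integral) is a numerical representation of $\succeq$ on $\mathcal{Q}_b$.
   Context: $\mathcal{Q}_b$ is the set of bounded, nondecreasing, left-continuous functions on $(0,1]$. The $\mathcal{L}_1$-topology on $\mathcal{Q}_b$ is given by the distance $\mathrm{dist}(\Phi,\Psi)=\int_0^1|\Phi(p)-\Psi(p)|\,dp$. A total preorder is reflexive, transitive, complete; $\succ$ its strict part; continuity means that for each $\Phi$ the sets $\{\Psi:\Psi\succeq\Phi\}$ and $\{\Psi:\Phi\succeq\Psi\}$ are closed. Monotonic: $\Phi\ge\Psi$ pointwise implies $\Phi\succeq\Psi$. Dual independence axiom: $\Phi\succ\Psi$ implies $\alpha\Phi+(1-\alpha)\Upsilon\succ\alpha\Psi+(1-\alpha)\Upsilon$ for all $\Upsilon\in\mathcal{Q}_b$, $\alpha\in(0,1)$. Numerical representation: $\Phi\succ\Psi\iff U(\Phi)>U(\Psi)$. *)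

theory Defs
  imports "HOL-Analysis.Analysis"
begin

text \<open>Q_b: bounded, nondecreasing, left-continuous functions on (0,1].
  Represented as functions real => real that vanish outside (0,1] (canonical extension).\<close>
definition Qb :: "(real \<Rightarrow> real) set" where
  "Qb = {\<Phi>. bounded (\<Phi> ` {0<..1}) \<and> mono_on {0<..1} \<Phi>
          \<and> (\<forall>p\<in>{0<..1}. (\<Phi> \<longlongrightarrow> \<Phi> p) (at_left p))
          \<and> (\<forall>p. p \<notin> {0<..1} \<longrightarrow> \<Phi> p = 0)}"

definition L1dist :: "(real \<Rightarrow> real) \<Rightarrow> (real \<Rightarrow> real) \<Rightarrow> real" where
  "L1dist \<Phi> \<Psi> = integral {0..1} (\<lambda>p. \<bar>\<Phi> p - \<Psi> p\<bar>)"

definition L1top :: "(real \<Rightarrow> real) topology" where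
  "L1top = Metric_space.mtopology Qb L1dist"

definition total_preorder_on :: "'a set \<Rightarrow> ('a \<Rightarrow> 'a \<Rightarrow> bool) \<Rightarrow> bool" where
  "total_preorder_on A R \<longleftrightarrow>
     (\<forall>x\<in>A. R x x) \<and>
     (\<forall>x\<in>A. \<forall>y\<in>A. \<forall>z\<in>A. R x y \<longrightarrow> R y z \<longrightarrow> R x z) \<and>
     (\<forall>x\<in>A. \<forall>y\<in>A. R x y \<or> R y x)"

definition strict_part :: "('a \<Rightarrow> 'a \<Rightarrow> bool) \<Rightarrow> 'a \<Rightarrow> 'a \<Rightarrow> bool" where
  "strict_part R x y \<longleftrightarrow> R x y \<and> \<not> R y x"

definition continuous_preorder :: "(real \<Rightarrow> real) topology \<Rightarrow> ((real \<Rightarrow> real) \<Rightarrow> (real \<Rightarrow> real) \<Rightarrow> bool) \<Rightarrow> bool" where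
  "continuous_preorder T R \<longleftrightarrow>
     (\<forall>\<Phi>\<in>topspace T. closedin T {\<Psi>\<in>topspace T. R \<Psi> \<Phi>} \<and> closedin T {\<Psi>\<in>topspace T. R \<Phi> \<Psi>})"

definition monotonic_pref :: "((real \<Rightarrow> real) \<Rightarrow> (real \<Rightarrow> real) \<Rightarrow> bool) \<Rightarrow> bool" where
  "monotonic_pref R \<longleftrightarrow>
     (\<forall>\<Phi>\<in>Qb. \<forall>\<Psi>\<in>Qb. (\<forall>p\<in>{0<..1}. \<Phi> p \<ge> \<Psi> p) \<longrightarrow> R \<Phi> \<Psi>)"

definition dual_independence :: "((real \<Rightarrow> real) \<Rightarrow> (real \<Rightarrow> real) \<Rightarrow> bool) \<Rightarrow> bool" where
  "dual_independence R \<longleftrightarrow>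
     (\<forall>\<Phi>\<in>Qb. \<forall>\<Psi>\<in>Qb. \<forall>\<Upsilon>\<in>Qb. \<forall>\<alpha>::real. 0 < \<alpha> \<and> \<alpha> < 1 \<longrightarrow> strict_part R \<Phi> \<Psi> \<longrightarrow>
        strict_part R (\<lambda>p. \<alpha> * \<Phi> p + (1 - \<alpha>) * \<Upsilon> p) (\<lambda>p. \<alpha> * \<Psi> p + (1 - \<alpha>) * \<Upsilon> p))"

text \<open>Lebesgue--Stieltjes integral over [0,1] with respect to w (w extended constantly outside [0,1]).\<close>
definition stieltjes01 :: "(real \<Rightarrow> real) \<Rightarrow> (real \<Rightarrow> real) \<Rightarrow> real" where
  "stieltjes01 w \<Phi> = (LINT p:{0..1}|interval_measure (\<lambda>x. w (max 0 (min 1 x))). \<Phi> p)"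

definition numerical_representation ::
  "'a set \<Rightarrow> ('a \<Rightarrow> 'a \<Rightarrow> bool) \<Rightarrow> ('a \<Rightarrow> real) \<Rightarrow> bool" where
  "numerical_representation A R U \<longleftrightarrow> (\<forall>x\<in>A. \<forall>y\<in>A. strict_part R x y \<longleftrightarrow> U x > U y)"

end

theory Submission
  imports Defs "HOL-Real_Asymp.Real_Asymp"
begin

definition Cst :: "real \<Rightarrow> real \<Rightarrow> real" where
  "Cst c = (\<lambda>p. if p \<in> {0<..1} then c else 0)"
definition Ind :: "real \<Rightarrow> real \<Rightarrow> real" where
  "Ind a = (\<lambda>p. if p \<in> {0<..1} \<and> a < p then 1 else 0)"
definition mix :: "real \<Rightarrow> (real \<Rightarrow> real) \<Rightarrow> (real \<Rightarrow> real) \<Rightarrow> real \<Rightarrow> real" where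
  "mix \<alpha> f g = (\<lambda>p. \<alpha> * f p + (1 - \<alpha>) * g p)"

lemma QbI:
  assumes "\<And>p. p \<in> {0<..1} \<Longrightarrow> \<bar>f p\<bar> \<le> B"
    and "\<And>x y. x \<in> {0<..1} \<Longrightarrow> y \<in> {0<..1} \<Longrightarrow> x \<le> y \<Longrightarrow> f x \<le> f y"
    and "\<And>p. p \<in> {0<..1} \<Longrightarrow> (f \<longlongrightarrow> f p) (at_left p)"
    and "\<And>p. p \<notin> {0<..1} \<Longrightarrow> f p = 0"
  shows "f \<in> Qb"
proof -
  have "bounded (f ` {0<..1})" unfolding bounded_iff using assms(1) by (intro exI[of _ B]) auto
  then show ?thesis unfolding Qb_def using assms by (auto simp: mono_on_def)
qed

lemma QbD:
  assumes "f \<in> Qb"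
  shows "\<exists>B. \<forall>p. \<bar>f p\<bar> \<le> B"
    and "\<And>x y. x \<in> {0<..1} \<Longrightarrow> y \<in> {0<..1} \<Longrightarrow> x \<le> y \<Longrightarrow> f x \<le> f y"
    and "\<And>p. p \<in> {0<..1} \<Longrightarrow> (f \<longlongrightarrow> f p) (at_left p)"
    and "\<And>p. p \<notin> {0<..1} \<Longrightarrow> f p = 0"
proof -
  from assms obtain B where B: "\<forall>p\<in>{0<..1}. \<bar>f p\<bar> \<le> B"
    unfolding Qb_def bounded_iff by auto
  have "\<forall>p. \<bar>f p\<bar> \<le> max B 0"
  proof
    fix p show "\<bar>f p\<bar> \<le> max B 0"
    proof (cases "p \<in> {0<..1}")
      case True then show ?thesis using B by fastforce
    next
      case False then show ?thesis using assms unfolding Qb_def by auto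
    qed
  qed
  then show "\<exists>B. \<forall>p. \<bar>f p\<bar> \<le> B" by blast
qed (use assms in \<open>auto simp: Qb_def mono_on_def\<close>)

lemma Cst_Qb: "Cst c \<in> Qb"
  by (rule QbI[where B="\<bar>c\<bar>"]) (auto simp: Cst_def intro!: tendsto_eventually eventually_at_leftI[where a=0])

lemma Ind_Qb: "Ind a \<in> Qb"
proof (rule QbI[where B=1])
  fix p :: real assume p: "p \<in> {0<..1}"
  show "(Ind a \<longlongrightarrow> Ind a p) (at_left p)"
  proof (cases "a < p")
    case True
    have "eventually (\<lambda>x. Ind a x = Ind a p) (at_left p)"
      using p True by (intro eventually_at_leftI[where a="max a 0"]) (auto simp: Ind_def)
    then show ?thesis by (rule tendsto_eventually)
  next
    case False
    have "eventually (\<lambda>x. Ind a x = Ind a p) (at_left p)"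
      using p False by (intro eventually_at_leftI[where a="0"]) (auto simp: Ind_def)
    then show ?thesis by (rule tendsto_eventually)
  qed
qed (auto simp: Ind_def)

lemma add_Qb: "f \<in> Qb \<Longrightarrow> g \<in> Qb \<Longrightarrow> (\<lambda>p. f p + g p) \<in> Qb"
proof -
  assume f: "f \<in> Qb" and g: "g \<in> Qb"
  obtain B1 where B1: "\<forall>p. \<bar>f p\<bar> \<le> B1" using QbD(1)[OF f] by blast
  obtain B2 where B2: "\<forall>p. \<bar>g p\<bar> \<le> B2" using QbD(1)[OF g] by blast
  show ?thesis
  proof (rule QbI[where B="B1+B2"])
    fix p :: real show "\<bar>f p + g p\<bar> \<le> B1 + B2" using B1 B2 abs_triangle_ineq[of "f p" "g p"]
      by (smt (verit))
  next
    fix x y :: real assume "x \<in> {0<..1}" "y \<in> {0<..1}" "x \<le> y"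
    then show "f x + g x \<le> f y + g y" using QbD(2)[OF f] QbD(2)[OF g] by (meson add_mono)
  next
    fix p :: real assume "p \<in> {0<..1}"
    then show "((\<lambda>p. f p + g p) \<longlongrightarrow> f p + g p) (at_left p)"
      using QbD(3)[OF f] QbD(3)[OF g] by (intro tendsto_add) auto
  qed (use QbD(4)[OF f] QbD(4)[OF g] in auto)
qed

lemma scal_Qb: "f \<in> Qb \<Longrightarrow> t \<ge> 0 \<Longrightarrow> (\<lambda>p. t * f p) \<in> Qb"
proof -
  assume f: "f \<in> Qb" and t: "t \<ge> 0"
  obtain B1 where B1: "\<forall>p. \<bar>f p\<bar> \<le> B1" using QbD(1)[OF f] by blast
  show ?thesis
  proof (rule QbI[where B="t*B1"])
    fix p :: real show "\<bar>t * f p\<bar> \<le> t * B1" using B1 t by (simp add: abs_mult mult_left_mono)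
  next
    fix x y :: real assume "x \<in> {0<..1}" "y \<in> {0<..1}" "x \<le> y"
    then show "t * f x \<le> t * f y" using QbD(2)[OF f] t by (simp add: mult_left_mono)
  next
    fix p :: real assume "p \<in> {0<..1}"
    then show "((\<lambda>p. t * f p) \<longlongrightarrow> t * f p) (at_left p)"
      using QbD(3)[OF f] by (intro tendsto_mult) auto
  qed (use QbD(4)[OF f] in auto)
qed

lemma mix_Qb: "f \<in> Qb \<Longrightarrow> g \<in> Qb \<Longrightarrow> 0 \<le> \<alpha> \<Longrightarrow> \<alpha> \<le> 1 \<Longrightarrow> mix \<alpha> f g \<in> Qb"
  unfolding mix_def by (intro add_Qb scal_Qb) auto

lemma sum_Qb: "finite K \<Longrightarrow> (\<And>k. k \<in> K \<Longrightarrow> f k \<in> Qb) \<Longrightarrow> (\<lambda>p. \<Sum>k\<in>K. f k p) \<in> Qb"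
proof (induction K rule: finite_induct)
  case empty
  have "(\<lambda>p. 0::real) = Cst 0" by (auto simp: Cst_def)
  then show ?case using Cst_Qb by simp
next
  case (insert x F)
  then show ?case by (simp add: add_Qb)
qed

lemma Qb_measurable: "f \<in> Qb \<Longrightarrow> f \<in> borel_measurable borel"
proof -
  assume f: "f \<in> Qb"
  show ?thesis
  proof (rule borel_measurable_piecewise_mono[of "{{0<..1}, {..0}, {1<..}}"])
    show "\<Union>{{0<..1}, {..0}, {1<..}} = (UNIV :: real set)" by auto
    fix c assume "c \<in> {{0<..1::real}, {..0}, {1<..}}"
    then show "mono_on c f" using QbD(2,4)[OF f] by (auto simp: mono_on_def)
  qed auto
qed

lemma Qb_abs_diff_integrable:
  assumes f: "f \<in> Qb" and g: "g \<in> Qb"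
  shows "set_integrable lborel {0..1} (\<lambda>p. \<bar>f p - g p\<bar>)"
proof -
  obtain B1 where B1: "\<forall>p. \<bar>f p\<bar> \<le> B1" using QbD(1)[OF f] by blast
  obtain B2 where B2: "\<forall>p. \<bar>g p\<bar> \<le> B2" using QbD(1)[OF g] by blast
  have m: "(\<lambda>p. \<bar>f p - g p\<bar>) \<in> borel_measurable lborel"
    using Qb_measurable[OF f] Qb_measurable[OF g] by measurable
  show ?thesis unfolding set_integrable_def
  proof (rule integrableI_bounded_set_indicator[where B="B1+B2"])
    show "AE x in lborel. x \<in> {0..1} \<longrightarrow> norm \<bar>f x - g x\<bar> \<le> B1 + B2"
    proof (rule AE_I2, intro impI)
      fix x :: real
      have "\<bar>f x - g x\<bar> \<le> \<bar>f x\<bar> + \<bar>g x\<bar>" by (rule abs_triangle_ineq4)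
      then show "norm \<bar>f x - g x\<bar> \<le> B1 + B2" using B1 B2 by (smt (verit) real_norm_def abs_abs)
    qed
  qed (use m in \<open>auto simp: emeasure_lborel_Icc\<close>)
qed

lemma L1dist_lebesgue:
  assumes f: "f \<in> Qb" and g: "g \<in> Qb"
  shows "L1dist f g = (LINT p:{0..1}|lborel. \<bar>f p - g p\<bar>)"
proof -
  have "(LINT p:{0..1}|lborel. \<bar>f p - g p\<bar>) = integral {0..1} (\<lambda>p. \<bar>f p - g p\<bar>)"
    by (rule set_borel_integral_eq_integral(2)[OF Qb_abs_diff_integrable[OF f g]])
  then show ?thesis unfolding L1dist_def by simp
qed

lemma L1dist_le:
  assumes f: "f \<in> Qb" and g: "g \<in> Qb" and h: "set_integrable lborel {0..1} h"
    and le: "\<And>p. p \<in> {0..1} \<Longrightarrow> \<bar>f p - g p\<bar> \<le> h p"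
  shows "L1dist f g \<le> (LINT p:{0..1}|lborel. h p)"
  unfolding L1dist_lebesgue[OF f g]
  by (rule set_integral_mono[OF Qb_abs_diff_integrable[OF f g] h le])

lemma L1dist_le_const:
  assumes f: "f \<in> Qb" and g: "g \<in> Qb" and le: "\<And>p. p \<in> {0..1} \<Longrightarrow> \<bar>f p - g p\<bar> \<le> k"
  shows "L1dist f g \<le> k"
proof -
  have "set_integrable lborel {0..1} (\<lambda>p::real. k)"
    unfolding set_integrable_def
    by (rule integrableI_bounded_set_indicator[where B="\<bar>k\<bar>"]) (auto simp: emeasure_lborel_Icc)
  from L1dist_le[OF f g this le] show ?thesis
    by (simp add: set_lebesgue_integral_def measure_lborel_Icc)
qed

lemma L1dist_nonneg: "L1dist f g \<ge> 0"
  unfolding L1dist_def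
  by (cases "(\<lambda>p. \<bar>f p - g p\<bar>) integrable_on {0..1}") (auto intro: integral_nonneg simp: not_integrable_integral)

lemma L1dist_Ind:
  assumes "a \<le> b"
  shows "L1dist (Ind a) (Ind b) \<le> b - a"
proof -
  have h: "set_integrable lborel {0..1} (indicator {a..b} :: real \<Rightarrow> real)"
    unfolding set_integrable_def
    by (rule integrableI_bounded_set_indicator[where B=1]) (auto simp: emeasure_lborel_Icc)
  have "L1dist (Ind a) (Ind b) \<le> (LINT p:{0..1}|lborel. indicator {a..b} p)"
    by (rule L1dist_le[OF Ind_Qb Ind_Qb h]) (use assms in \<open>auto simp: Ind_def indicator_def\<close>)
  also have "\<dots> \<le> (LINT p|lborel. indicator {a..b} p)"
    unfolding set_lebesgue_integral_def
    apply (rule integral_mono)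
    subgoal using h unfolding set_integrable_def by simp
    subgoal by (rule integrable_real_indicator) (use assms in \<open>auto simp: emeasure_lborel_Icc\<close>)
    subgoal by (auto simp: indicator_def)
    done
  also have "\<dots> = b - a" using assms
    by (simp add: measure_lborel_Icc emeasure_lborel_Icc)
  finally show ?thesis .
qed

lemma L1dist_self: "L1dist f f = 0"
  unfolding L1dist_def by simp

lemma L1dist_commute: "L1dist f g = L1dist g f"
  unfolding L1dist_def by (simp add: abs_minus_commute)

lemma L1dist_triangle:
  assumes f: "f \<in> Qb" and g: "g \<in> Qb" and h: "h \<in> Qb"
  shows "L1dist f h \<le> L1dist f g + L1dist g h"
proof -
  have "L1dist f h \<le> (LINT p:{0..1}|lborel. \<bar>f p - g p\<bar> + \<bar>g p - h p\<bar>)"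
    by (rule L1dist_le[OF f h set_integral_add(1)[OF Qb_abs_diff_integrable[OF f g] Qb_abs_diff_integrable[OF g h]]])
      arith
  also have "\<dots> = L1dist f g + L1dist g h"
    unfolding L1dist_lebesgue[OF f g] L1dist_lebesgue[OF g h]
    by (rule set_integral_add(2)[OF Qb_abs_diff_integrable[OF f g] Qb_abs_diff_integrable[OF g h]])
  finally show ?thesis .
qed

lemma L1dist_zero:
  assumes f: "f \<in> Qb" and g: "g \<in> Qb" and z: "L1dist f g = 0"
  shows "f = g"
proof (rule ccontr)
  assume "f \<noteq> g"
  then obtain p where fp: "f p \<noteq> g p" by auto
  have p: "p \<in> {0<..1}"
    using fp QbD(4)[OF f] QbD(4)[OF g] by metis
  define e where "e = \<bar>f p - g p\<bar>"
  have e: "e > 0" using fp unfolding e_def by simp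
  have lim: "((\<lambda>x. \<bar>f x - g x\<bar>) \<longlongrightarrow> e) (at_left p)"
    unfolding e_def using QbD(3)[OF f p] QbD(3)[OF g p] by (intro tendsto_intros)
  have "eventually (\<lambda>x. \<bar>f x - g x\<bar> > e/2) (at_left p)"
    using order_tendstoD(1)[OF lim, of "e/2"] e by simp
  then obtain b where b: "b < p" "\<And>x. b < x \<Longrightarrow> x < p \<Longrightarrow> \<bar>f x - g x\<bar> > e/2"
    unfolding eventually_at_left_field by blast
  define c where "c = max b 0"
  have c: "0 \<le> c" "c < p" using b p unfolding c_def by auto
  have hi: "set_integrable lborel {0..1} (\<lambda>x. e/2 * indicator {c<..<p} x)"
    unfolding set_integrable_def
    by (rule integrableI_bounded_set_indicator[where B="e/2"]) (use e in \<open>auto simp: indicator_def\<close>)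
  have "(LINT x:{0..1}|lborel. e/2 * indicator {c<..<p} x) \<le> L1dist f g"
    unfolding L1dist_lebesgue[OF f g]
  proof (rule set_integral_mono[OF hi Qb_abs_diff_integrable[OF f g]])
    fix x :: real assume "x \<in> {0..1}"
    show "e/2 * indicator {c<..<p} x \<le> \<bar>f x - g x\<bar>"
      using b(2)[of x] e unfolding c_def indicator_def by auto
  qed
  also have "(LINT x:{0..1}|lborel. e/2 * indicator {c<..<p} x) = (LINT x|lborel. e/2 * indicator {c<..<p} x)"
    unfolding set_lebesgue_integral_def
    by (rule Bochner_Integration.integral_cong) (use c p in \<open>auto simp: indicator_def\<close>)
  also have "\<dots> = e/2 * (p - c)"
    using c by simp
  finally have "e/2 * (p - c) \<le> 0" using z by simp
  moreover have "e/2 * (p - c) > 0" using e c by simp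
  ultimately show False by simp
qed

lemma L1_metric: "Metric_space Qb L1dist"
  by (rule Metric_space.intro) (auto simp: L1dist_nonneg L1dist_commute L1dist_self
      intro: L1dist_zero L1dist_triangle)

interpretation L1: Metric_space Qb L1dist by (rule L1_metric)

lemma topspace_L1top: "topspace L1top = Qb"
  unfolding L1top_def by simp

lemma closedin_L1top_eventually:
  assumes S: "closedin L1top S" and x: "x \<in> Qb" "x \<notin> S" and xs: "\<And>n. xs n \<in> Qb"
    and lim: "(\<lambda>n. L1dist x (xs n)) \<longlonglongrightarrow> 0"
  shows "eventually (\<lambda>n. xs n \<notin> S) sequentially"
proof -
  have "openin L1top (Qb - S)" using S unfolding closedin_def topspace_L1top by simp
  then have H: "\<forall>y. y \<in> Qb - S \<longrightarrow> (\<exists>r>0. L1.mball y r \<subseteq> Qb - S)"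
    unfolding L1top_def L1.openin_mtopology by (rule conjunct2)
  have "x \<in> Qb - S" using x by simp
  then obtain r where r: "r > 0" "L1.mball x r \<subseteq> Qb - S"
    using H by meson
  have "eventually (\<lambda>n. L1dist x (xs n) < r) sequentially"
    using order_tendstoD(2)[OF lim r(1)] .
  then show ?thesis
  proof (rule eventually_mono)
    fix n assume "L1dist x (xs n) < r"
    then have "xs n \<in> L1.mball x r"
      using x xs by auto
    then show "xs n \<notin> S" using r by auto
  qed
qed

lemma tendsto0_le:
  fixes d u :: "nat \<Rightarrow> real"
  assumes "u \<longlonglongrightarrow> 0" "\<And>n. 0 \<le> d n" "\<And>n. d n \<le> u n"
  shows "d \<longlonglongrightarrow> 0"
  by (rule tendsto_sandwich[of "\<lambda>_. 0" d sequentially u]) (use assms in auto)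

lemma mix_Cst: "mix \<alpha> (Cst x) (Cst y) = Cst (\<alpha> * x + (1 - \<alpha>) * y)"
  by (auto simp: mix_def Cst_def)

lemma L1dist_Cst: "L1dist (Cst s) (Cst t) \<le> \<bar>s - t\<bar>"
  by (rule L1dist_le_const[OF Cst_Qb Cst_Qb]) (auto simp: Cst_def)

lemma L1dist_Cst_lim:
  assumes "t \<longlonglongrightarrow> s"
  shows "(\<lambda>n. L1dist (Cst s) (Cst (t n))) \<longlonglongrightarrow> 0"
proof (rule tendsto0_le[OF _ L1dist_nonneg L1dist_Cst])
  show "(\<lambda>n. \<bar>s - t n\<bar>) \<longlonglongrightarrow> 0"
  proof -
    have "(\<lambda>n. \<bar>s - t n\<bar>) \<longlonglongrightarrow> \<bar>s - s\<bar>"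
      by (intro tendsto_intros assms)
    then show ?thesis by simp
  qed
qed

locale pref =
  fixes R :: "(real \<Rightarrow> real) \<Rightarrow> (real \<Rightarrow> real) \<Rightarrow> bool"
  assumes tp: "total_preorder_on Qb R"
    and mon: "monotonic_pref R"
    and cont: "continuous_preorder L1top R"
    and di: "dual_independence R"
begin

abbreviation S where "S \<equiv> strict_part R"

lemma refl: "f \<in> Qb \<Longrightarrow> R f f"
  using tp unfolding total_preorder_on_def by blast

lemma trans: "f \<in> Qb \<Longrightarrow> g \<in> Qb \<Longrightarrow> h \<in> Qb \<Longrightarrow> R f g \<Longrightarrow> R g h \<Longrightarrow> R f h"
  using tp unfolding total_preorder_on_def by blast

lemma total: "f \<in> Qb \<Longrightarrow> g \<in> Qb \<Longrightarrow> \<not> R f g \<Longrightarrow> R g f"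
  using tp unfolding total_preorder_on_def by blast

lemma monoR: "f \<in> Qb \<Longrightarrow> g \<in> Qb \<Longrightarrow> (\<And>p. p \<in> {0<..1} \<Longrightarrow> g p \<le> f p) \<Longrightarrow> R f g"
  using mon unfolding monotonic_pref_def by blast

lemma strict_R_trans: "f \<in> Qb \<Longrightarrow> g \<in> Qb \<Longrightarrow> h \<in> Qb \<Longrightarrow> S f g \<Longrightarrow> R g h \<Longrightarrow> S f h"
  unfolding strict_part_def by (meson trans)

lemma R_strict_trans: "f \<in> Qb \<Longrightarrow> g \<in> Qb \<Longrightarrow> h \<in> Qb \<Longrightarrow> R f g \<Longrightarrow> S g h \<Longrightarrow> S f h"
  unfolding strict_part_def by (meson trans)

lemma diS: "f \<in> Qb \<Longrightarrow> g \<in> Qb \<Longrightarrow> h \<in> Qb \<Longrightarrow> 0 < \<alpha> \<Longrightarrow> \<alpha> < 1 \<Longrightarrow> S f g \<Longrightarrow> S (mix \<alpha> f h) (mix \<alpha> g h)"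
  using di unfolding dual_independence_def mix_def by blast

lemma contA:
  assumes P: "P \<in> Qb" and x: "x \<in> Qb" and xs: "\<And>n. xs n \<in> Qb"
    and lim: "(\<lambda>n. L1dist x (xs n)) \<longlonglongrightarrow> 0" and nR: "\<not> R x P"
  shows "eventually (\<lambda>n. \<not> R (xs n) P) sequentially"
proof -
  have cl: "closedin L1top {\<Psi>\<in>Qb. R \<Psi> P}"
    using cont P unfolding continuous_preorder_def topspace_L1top by blast
  from closedin_L1top_eventually[OF cl x _ xs lim] nR
  show ?thesis by (auto elim: eventually_mono simp: xs)
qed

lemma contB:
  assumes P: "P \<in> Qb" and x: "x \<in> Qb" and xs: "\<And>n. xs n \<in> Qb"
    and lim: "(\<lambda>n. L1dist x (xs n)) \<longlonglongrightarrow> 0" and nR: "\<not> R P x"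
  shows "eventually (\<lambda>n. \<not> R P (xs n)) sequentially"
proof -
  have cl: "closedin L1top {\<Psi>\<in>Qb. R P \<Psi>}"
    using cont P unfolding continuous_preorder_def topspace_L1top by blast
  from closedin_L1top_eventually[OF cl x _ xs lim] nR
  show ?thesis by (auto elim: eventually_mono simp: xs)
qed

lemma closeA:
  assumes P: "P \<in> Qb" and x: "x \<in> Qb" and xs: "\<And>n. xs n \<in> Qb"
    and lim: "(\<lambda>n. L1dist x (xs n)) \<longlonglongrightarrow> 0" and R: "\<And>n. R (xs n) P"
  shows "R x P"
proof (rule ccontr)
  assume "\<not> R x P"
  from contA[OF P x xs lim this] obtain N where "\<And>n. n \<ge> N \<Longrightarrow> \<not> R (xs n) P"
    unfolding eventually_sequentially by blast
  then show False using R by blast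
qed

lemma closeB:
  assumes P: "P \<in> Qb" and x: "x \<in> Qb" and xs: "\<And>n. xs n \<in> Qb"
    and lim: "(\<lambda>n. L1dist x (xs n)) \<longlonglongrightarrow> 0" and R: "\<And>n. R P (xs n)"
  shows "R P x"
proof (rule ccontr)
  assume "\<not> R P x"
  from contB[OF P x xs lim this] obtain N where "\<And>n. n \<ge> N \<Longrightarrow> \<not> R P (xs n)"
    unfolding eventually_sequentially by blast
  then show False using R by blast
qed

lemma Cst_mono: "c \<le> d \<Longrightarrow> R (Cst d) (Cst c)"
  by (rule monoR[OF Cst_Qb Cst_Qb]) (auto simp: Cst_def)

definition nondeg where "nondeg \<longleftrightarrow> (\<exists>c d. S (Cst c) (Cst d))"

lemma strict_Cst:
  assumes nd: nondeg and ab: "a < b"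
  shows "S (Cst b) (Cst a)"
proof -
  obtain c0 d0 where s0: "S (Cst c0) (Cst d0)" using nd unfolding nondeg_def by blast
  have cd: "d0 < c0"
  proof (rule ccontr)
    assume "\<not> d0 < c0"
    then have "R (Cst d0) (Cst c0)" by (intro Cst_mono) simp
    then show False using s0 unfolding strict_part_def by blast
  qed
  define L where "L = c0 - d0"
  define \<alpha> where "\<alpha> = min (1/2) ((b - a) / (2 * L))"
  have L: "L > 0" using cd unfolding L_def by simp
  have a0: "0 < \<alpha>" "\<alpha> < 1" using L ab unfolding \<alpha>_def by auto
  have aL: "\<alpha> * L \<le> (b - a) / 2"
  proof -
    have "\<alpha> \<le> (b - a) / (2 * L)" unfolding \<alpha>_def by simp
    then have "\<alpha> * L \<le> (b - a) / (2 * L) * L" by (rule mult_right_mono) (use L in auto)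
    also have "\<dots> = (b - a) / 2" using L by (simp add: field_simps)
    finally show ?thesis .
  qed
  define e where "e = (a - \<alpha> * d0) / (1 - \<alpha>)"
  have e1: "\<alpha> * d0 + (1 - \<alpha>) * e = a" using a0 unfolding e_def by (simp add: field_simps)
  have e2: "\<alpha> * c0 + (1 - \<alpha>) * e = a + \<alpha> * L" using e1 unfolding L_def by (simp add: algebra_simps)
  have "S (mix \<alpha> (Cst c0) (Cst e)) (mix \<alpha> (Cst d0) (Cst e))"
    by (rule diS[OF Cst_Qb Cst_Qb Cst_Qb a0 s0])
  then have s1: "S (Cst (a + \<alpha> * L)) (Cst a)" unfolding mix_Cst e1 e2 .
  have "R (Cst b) (Cst (a + \<alpha> * L))" using aL ab by (intro Cst_mono) simp
  from R_strict_trans[OF Cst_Qb Cst_Qb Cst_Qb this s1] show ?thesis .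
qed

lemma ce_exists:
  assumes f: "f \<in> Qb"
  shows "\<exists>c. R f (Cst c) \<and> R (Cst c) f"
proof -
  obtain B0 where B0: "\<forall>p. \<bar>f p\<bar> \<le> B0" using QbD(1)[OF f] by blast
  define B where "B = max B0 0"
  have B: "\<And>p. \<bar>f p\<bar> \<le> B" "B \<ge> 0" using B0 unfolding B_def by (auto intro: order_trans)
  have Bl: "\<And>p. -B \<le> f p" and Bu: "\<And>p. f p \<le> B"
    using B(1) abs_le_iff by (metis minus_le_iff, metis)
  define A where "A = {t \<in> {-B..B}. R f (Cst t)}"
  have "R f (Cst (-B))"
    by (rule monoR[OF f Cst_Qb]) (use Bl Bu in \<open>auto simp: Cst_def\<close>)
  then have mA: "-B \<in> A"
    unfolding A_def using B by auto
  have clA: "closed A"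
    unfolding closed_sequential_limits
  proof (intro allI impI, elim conjE)
    fix t l assume tA: "\<forall>n. t n \<in> A" and tl: "t \<longlonglongrightarrow> l"
    have "l \<in> {-B..B}"
      using tA tl closed_atLeastAtMost[of "-B" B] unfolding A_def
      by (metis (no_types, lifting) closed_sequentially mem_Collect_eq)
    moreover have "R f (Cst l)"
      by (rule closeB[OF f Cst_Qb Cst_Qb L1dist_Cst_lim[OF tl]]) (use tA A_def in auto)
    ultimately show "l \<in> A" unfolding A_def by simp
  qed
  have bA: "bdd_above A" unfolding A_def by (auto intro: bdd_aboveI[of _ B])
  define c where "c = Sup A"
  have cA: "c \<in> A" unfolding c_def using closed_contains_Sup[OF _ bA clA] mA by blast
  then have c1: "R f (Cst c)" and cB: "c \<le> B" unfolding A_def by auto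
  have "R (Cst c) f"
  proof (cases "c = B")
    case True
    have "R (Cst B) f"
      by (rule monoR[OF Cst_Qb f]) (use Bl Bu in \<open>auto simp: Cst_def\<close>)
    then show ?thesis using True by simp
  next
    case False
    then have cB': "c < B" using cB by simp
    define t where "t n = c + (B - c) / (real n + 1)" for n
    have tl: "t \<longlonglongrightarrow> c"
      unfolding t_def using cB' by real_asymp
    show ?thesis
    proof (rule closeA[OF f Cst_Qb Cst_Qb L1dist_Cst_lim[OF tl]])
      fix n
      have "(B - c) / (real n + 1) \<le> B - c" using cB' by (simp add: divide_le_eq)
      moreover have "(B - c) / (real n + 1) > 0" using cB' by simp
      ultimately have "t n > c" "t n \<le> B" unfolding t_def by auto
      moreover have "c \<ge> -B" using cA unfolding A_def by auto
      ultimately have "t n \<notin> A"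
        using cSup_upper[OF _ bA, of "t n"] unfolding c_def by force
      moreover have "t n \<in> {-B..B}" using \<open>t n > c\<close> \<open>t n \<le> B\<close> \<open>c \<ge> -B\<close> by auto
      ultimately have "\<not> R f (Cst (t n))" unfolding A_def by auto
      then show "R (Cst (t n)) f" by (rule total[OF f Cst_Qb])
    qed
  qed
  with c1 show ?thesis by blast
qed

end


lemma mix_Cst_dist:
  assumes "0 \<le> \<alpha>" "\<alpha> \<le> 1" "U \<in> Qb"
  shows "L1dist (mix \<alpha> (Cst c) U) (mix \<alpha> (Cst d) U) \<le> \<bar>c - d\<bar>"
proof (rule L1dist_le_const[OF mix_Qb[OF Cst_Qb assms(3) assms(1,2)] mix_Qb[OF Cst_Qb assms(3) assms(1,2)]])
  fix p :: real
  have "\<bar>mix \<alpha> (Cst c) U p - mix \<alpha> (Cst d) U p\<bar> = \<alpha> * \<bar>Cst c p - Cst d p\<bar>"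
    using assms by (simp add: mix_def abs_mult flip: right_diff_distrib)
  also have "\<dots> \<le> 1 * \<bar>Cst c p - Cst d p\<bar>" using assms by (intro mult_right_mono) auto
  also have "\<dots> \<le> \<bar>c - d\<bar>" by (simp add: Cst_def)
  finally show "\<bar>mix \<alpha> (Cst c) U p - mix \<alpha> (Cst d) U p\<bar> \<le> \<bar>c - d\<bar>" .
qed

lemma inv_lim: "(\<lambda>n. 1 / (real n + 1)) \<longlonglongrightarrow> 0"
  by real_asymp

locale pref_nd = pref +
  assumes nd: nondeg
begin

definition CE where "CE f = (SOME c. R f (Cst c) \<and> R (Cst c) f)"

lemma CE: "f \<in> Qb \<Longrightarrow> R f (Cst (CE f)) \<and> R (Cst (CE f)) f"
  unfolding CE_def by (rule someI_ex) (rule ce_exists)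

lemma CE_unique:
  assumes f: "f \<in> Qb" and c: "R f (Cst c)" "R (Cst c) f"
  shows "CE f = c"
proof (rule ccontr)
  assume ne: "CE f \<noteq> c"
  show False
  proof (cases "c < CE f")
    case True
    have "R (Cst c) (Cst (CE f))" using trans[OF Cst_Qb f Cst_Qb c(2)] CE[OF f] by blast
    then show False using strict_Cst[OF nd True] unfolding strict_part_def by blast
  next
    case False
    then have lt: "CE f < c" using ne by simp
    have "R (Cst (CE f)) (Cst c)" using trans[OF Cst_Qb f Cst_Qb _ c(1)] CE[OF f] by blast
    then show False using strict_Cst[OF nd lt] unfolding strict_part_def by blast
  qed
qed

lemma CE_Cst: "CE (Cst c) = c"
  by (rule CE_unique[OF Cst_Qb refl[OF Cst_Qb] refl[OF Cst_Qb]])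

lemma CE_rep:
  assumes f: "f \<in> Qb" and g: "g \<in> Qb"
  shows "S f g \<longleftrightarrow> CE g < CE f"
proof
  assume s: "S f g"
  show "CE g < CE f"
  proof (rule ccontr)
    assume "\<not> CE g < CE f"
    then have "R (Cst (CE g)) (Cst (CE f))" by (intro Cst_mono) simp
    then have "R g f"
      using CE[OF f] CE[OF g] trans[OF g Cst_Qb f] trans[OF g Cst_Qb Cst_Qb] by blast
    then show False using s unfolding strict_part_def by blast
  qed
next
  assume lt: "CE g < CE f"
  have "S (Cst (CE f)) (Cst (CE g))" by (rule strict_Cst[OF nd lt])
  then have "S f (Cst (CE g))" using R_strict_trans[OF f Cst_Qb Cst_Qb] CE[OF f] by blast
  then show "S f g" using strict_R_trans[OF f Cst_Qb g] CE[OF g] by blast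
qed

lemma CE_mono:
  assumes f: "f \<in> Qb" and g: "g \<in> Qb" and le: "\<And>p. p \<in> {0<..1} \<Longrightarrow> g p \<le> f p"
  shows "CE g \<le> CE f"
  using CE_rep[OF g f] monoR[OF f g le] unfolding strict_part_def by auto

lemma mixC:
  assumes P: "P \<in> Qb" and U: "U \<in> Qb" and a: "0 < \<alpha>" "\<alpha> < 1"
    and c: "R P (Cst c)" "R (Cst c) P"
  shows "R (mix \<alpha> P U) (mix \<alpha> (Cst c) U) \<and> R (mix \<alpha> (Cst c) U) (mix \<alpha> P U)"
proof
  define e where "e n = 1 / (real n + 1)" for n
  have e0: "\<And>n. e n > 0" unfolding e_def by simp
  have el: "e \<longlonglongrightarrow> 0" unfolding e_def by (rule inv_lim)
  have mQ: "\<And>x. mix \<alpha> (Cst x) U \<in> Qb" using a by (intro mix_Qb Cst_Qb U) auto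
  have mP: "mix \<alpha> P U \<in> Qb" using a by (intro mix_Qb P U) auto
  have lim: "(\<lambda>n. L1dist (mix \<alpha> (Cst c) U) (mix \<alpha> (Cst (c + s * e n)) U)) \<longlonglongrightarrow> 0"
    if s: "\<bar>s\<bar> = 1" for s
  proof (rule tendsto0_le[OF el L1dist_nonneg])
    fix n
    show "L1dist (mix \<alpha> (Cst c) U) (mix \<alpha> (Cst (c + s * e n)) U) \<le> e n"
      using mix_Cst_dist[of \<alpha> U c "c + s * e n"] a U s e0[of n] by (simp add: abs_mult)
  qed
  show "R (mix \<alpha> (Cst c) U) (mix \<alpha> P U)"
  proof (rule closeA[OF mP mQ mQ lim[of 1]])
    fix n
    have "S (Cst (c + 1 * e n)) (Cst c)" using e0[of n] by (intro strict_Cst[OF nd]) simp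
    then have "S (Cst (c + 1 * e n)) P" using strict_R_trans[OF Cst_Qb Cst_Qb P] c by blast
    then have "S (mix \<alpha> (Cst (c + 1 * e n)) U) (mix \<alpha> P U)" by (rule diS[OF Cst_Qb P U a])
    then show "R (mix \<alpha> (Cst (c + 1 * e n)) U) (mix \<alpha> P U)" unfolding strict_part_def by blast
  qed simp
  show "R (mix \<alpha> P U) (mix \<alpha> (Cst c) U)"
  proof (rule closeB[OF mP mQ mQ lim[of "-1"]])
    fix n
    have "S (Cst c) (Cst (c + -1 * e n))" using e0[of n] by (intro strict_Cst[OF nd]) simp
    then have "S P (Cst (c + -1 * e n))" using R_strict_trans[OF P Cst_Qb Cst_Qb] c by blast
    then have "S (mix \<alpha> P U) (mix \<alpha> (Cst (c + -1 * e n)) U)" by (rule diS[OF P Cst_Qb U a])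
    then show "R (mix \<alpha> P U) (mix \<alpha> (Cst (c + -1 * e n)) U)" unfolding strict_part_def by blast
  qed simp
qed

lemma CE_mix:
  assumes f: "f \<in> Qb" and g: "g \<in> Qb" and a: "0 \<le> \<alpha>" "\<alpha> \<le> 1"
  shows "CE (mix \<alpha> f g) = \<alpha> * CE f + (1 - \<alpha>) * CE g"
proof (cases "\<alpha> = 0 \<or> \<alpha> = 1")
  case True
  then show ?thesis
  proof
    assume "\<alpha> = 0" then have "mix \<alpha> f g = g" by (auto simp: mix_def)
    then show ?thesis using \<open>\<alpha> = 0\<close> by simp
  next
    assume "\<alpha> = 1" then have "mix \<alpha> f g = f" by (auto simp: mix_def)
    then show ?thesis using \<open>\<alpha> = 1\<close> by simp
  qed
next
  case False
  then have a': "0 < \<alpha>" "\<alpha> < 1" "0 < 1 - \<alpha>" "1 - \<alpha> < 1" using a by auto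
  define x where "x = CE f"
  define y where "y = CE g"
  note h1 = mixC[OF f g a'(1,2) CE[OF f, THEN conjunct1] CE[OF f, THEN conjunct2]]
  have e1: "mix \<alpha> (Cst x) g = mix (1 - \<alpha>) g (Cst x)" by (auto simp: mix_def)
  note h2 = mixC[OF g Cst_Qb a'(3,4) CE[OF g, THEN conjunct1] CE[OF g, THEN conjunct2], of x]
  have e2: "mix (1 - \<alpha>) (Cst y) (Cst x) = Cst (\<alpha> * x + (1 - \<alpha>) * y)"
    unfolding mix_Cst by (simp add: algebra_simps)
  have Q1: "mix \<alpha> f g \<in> Qb" using a by (intro mix_Qb f g)
  have Q2: "mix \<alpha> (Cst x) g \<in> Qb" using a by (intro mix_Qb Cst_Qb g)
  have Q3: "Cst (\<alpha> * x + (1 - \<alpha>) * y) \<in> Qb" by (rule Cst_Qb)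
  have r1: "R (mix \<alpha> f g) (mix \<alpha> (Cst x) g)" "R (mix \<alpha> (Cst x) g) (mix \<alpha> f g)"
    using h1 unfolding x_def by auto
  have r2: "R (mix \<alpha> (Cst x) g) (Cst (\<alpha> * x + (1 - \<alpha>) * y))" "R (Cst (\<alpha> * x + (1 - \<alpha>) * y)) (mix \<alpha> (Cst x) g)"
    using h2 unfolding e1 y_def[symmetric] e2 by auto
  have "CE (mix \<alpha> f g) = \<alpha> * x + (1 - \<alpha>) * y"
    by (rule CE_unique[OF Q1 trans[OF Q1 Q2 Q3 r1(1) r2(1)] trans[OF Q3 Q2 Q1 r2(2) r1(2)]])
  then show ?thesis unfolding x_def y_def .
qed

lemma CE_scal:
  assumes f: "f \<in> Qb" and t: "t \<ge> 0"
  shows "CE (\<lambda>p. t * f p) = t * CE f"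
proof (cases "t \<le> 1")
  case True
  have "(\<lambda>p. t * f p) = mix t f (Cst 0)" by (auto simp: mix_def Cst_def)
  then show ?thesis using CE_mix[OF f Cst_Qb t True] by (simp add: CE_Cst)
next
  case False
  have e: "mix (1/t) (\<lambda>p. t * f p) (Cst 0) = f" using False by (auto simp: mix_def Cst_def)
  have "CE (mix (1/t) (\<lambda>p. t * f p) (Cst 0)) = 1/t * CE (\<lambda>p. t * f p) + (1 - 1/t) * 0"
    using CE_mix[OF scal_Qb[OF f t] Cst_Qb, of "1/t"] False by (simp add: CE_Cst)
  then have "CE f = 1/t * CE (\<lambda>p. t * f p)" unfolding e by simp
  then show ?thesis using False by (simp add: field_simps)
qed

lemma CE_add:
  assumes f: "f \<in> Qb" and g: "g \<in> Qb"
  shows "CE (\<lambda>p. f p + g p) = CE f + CE g"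
proof -
  have "(\<lambda>p. f p + g p) = (\<lambda>p. 2 * mix (1/2) f g p)" by (auto simp: mix_def)
  then show ?thesis
    using CE_scal[OF mix_Qb[OF f g, of "1/2"], of 2] CE_mix[OF f g, of "1/2"] by simp
qed

lemma CE_sum:
  "finite K \<Longrightarrow> (\<And>k. k \<in> K \<Longrightarrow> f k \<in> Qb) \<Longrightarrow> CE (\<lambda>p. \<Sum>k\<in>K. f k p) = (\<Sum>k\<in>K. CE (f k))"
proof (induction K rule: finite_induct)
  case empty
  have "(\<lambda>p. 0::real) = Cst 0" by (auto simp: Cst_def)
  then show ?case by (simp add: CE_Cst)
next
  case (insert x F)
  then show ?case by (simp add: CE_add sum_Qb)
qed

end


lemma L1dist_Ind_abs: "L1dist (Ind a) (Ind b) \<le> \<bar>a - b\<bar>"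
proof (cases "a \<le> b")
  case True then show ?thesis using L1dist_Ind[OF True] by simp
next
  case False then show ?thesis using L1dist_Ind[of b a] L1dist_commute[of "Ind a" "Ind b"] by simp
qed

context pref_nd
begin

lemma CE_cont:
  assumes f: "f \<in> Qb" and xs: "\<And>n. xs n \<in> Qb" and lim: "(\<lambda>n. L1dist f (xs n)) \<longlonglongrightarrow> 0"
  shows "(\<lambda>n. CE (xs n)) \<longlonglongrightarrow> CE f"
proof (rule order_tendstoI)
  fix a assume a: "a < CE f"
  then have "S f (Cst a)" using CE_rep[OF f Cst_Qb] by (simp add: CE_Cst)
  then have "\<not> R (Cst a) f" unfolding strict_part_def by blast
  from contB[OF Cst_Qb f xs lim this]
  show "eventually (\<lambda>n. a < CE (xs n)) sequentially"
  proof (rule eventually_mono)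
    fix n assume "\<not> R (Cst a) (xs n)"
    then have "S (xs n) (Cst a)" using total[OF Cst_Qb xs] unfolding strict_part_def by blast
    then show "a < CE (xs n)" using CE_rep[OF xs Cst_Qb] by (simp add: CE_Cst)
  qed
next
  fix a assume a: "a > CE f"
  then have "S (Cst a) f" using CE_rep[OF Cst_Qb f] by (simp add: CE_Cst)
  then have "\<not> R f (Cst a)" unfolding strict_part_def by blast
  from contA[OF Cst_Qb f xs lim this]
  show "eventually (\<lambda>n. CE (xs n) < a) sequentially"
  proof (rule eventually_mono)
    fix n assume "\<not> R (xs n) (Cst a)"
    then have "S (Cst a) (xs n)" using total[OF xs Cst_Qb] unfolding strict_part_def by blast
    then show "CE (xs n) < a" using CE_rep[OF Cst_Qb xs] by (simp add: CE_Cst)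
  qed
qed

definition w where "w a = 1 - CE (Ind a)"

lemma w_mono: "a \<le> b \<Longrightarrow> w a \<le> w b"
proof -
  assume ab: "a \<le> b"
  have "CE (Ind b) \<le> CE (Ind a)"
    by (rule CE_mono[OF Ind_Qb Ind_Qb]) (use ab in \<open>auto simp: Ind_def\<close>)
  then show ?thesis unfolding w_def by simp
qed

lemma w_low: "a \<le> 0 \<Longrightarrow> w a = 0"
proof -
  assume "a \<le> 0"
  then have "Ind a = Cst 1" by (auto simp: Ind_def Cst_def)
  then show ?thesis unfolding w_def by (simp add: CE_Cst)
qed

lemma w_high: "a \<ge> 1 \<Longrightarrow> w a = 1"
proof -
  assume "a \<ge> 1"
  then have "Ind a = Cst 0" by (auto simp: Ind_def Cst_def)
  then show ?thesis unfolding w_def by (simp add: CE_Cst)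
qed

lemma w_clamp: "w (max 0 (min 1 x)) = w x"
  by (cases "x \<le> 0"; cases "x \<ge> 1") (auto simp: w_low w_high max_def min_def)

lemma w_cont: "isCont w a"
  unfolding continuous_at_sequentially
proof (intro allI impI)
  fix x :: "nat \<Rightarrow> real" assume xa: "x \<longlonglongrightarrow> a"
  have "(\<lambda>n. L1dist (Ind a) (Ind (x n))) \<longlonglongrightarrow> 0"
  proof (rule tendsto0_le[OF _ L1dist_nonneg L1dist_Ind_abs])
    have "(\<lambda>n. \<bar>a - x n\<bar>) \<longlonglongrightarrow> \<bar>a - a\<bar>" by (intro tendsto_intros xa)
    then show "(\<lambda>n. \<bar>a - x n\<bar>) \<longlonglongrightarrow> 0" by simp
  qed
  from CE_cont[OF Ind_Qb Ind_Qb this]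
  have "(\<lambda>n. 1 - CE (Ind (x n))) \<longlonglongrightarrow> 1 - CE (Ind a)" by (intro tendsto_intros)
  then show "(w \<circ> x) \<longlonglongrightarrow> w a" unfolding w_def comp_def .
qed

end


lemma dc01:
  fixes M :: "real measure" and s :: "nat \<Rightarrow> real \<Rightarrow> real" and f :: "real \<Rightarrow> real" and B :: real
  assumes sM: "sets M = sets borel" and fin: "emeasure M {0..1} < \<infinity>"
    and sm: "\<And>n. s n \<in> borel_measurable borel" and fm: "f \<in> borel_measurable borel"
    and bd: "\<And>n x. \<bar>s n x\<bar> \<le> B"
    and lim: "\<And>x. x \<in> {0..1} \<Longrightarrow> (\<lambda>n. s n x) \<longlonglongrightarrow> f x"
  shows "(\<lambda>n. LINT x:{0..1}|M. s n x) \<longlonglongrightarrow> (LINT x:{0..1}|M. f x)"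
  unfolding set_lebesgue_integral_def
proof (rule integral_dominated_convergence[where w="\<lambda>x. B * indicator {0..1} x"])
  have eq: "borel_measurable M = borel_measurable borel"
    by (rule measurable_cong_sets[OF sM refl])
  have A: "{0..1} \<in> sets M" using sM by simp
  show "(\<lambda>x. indicator {0..1} x *\<^sub>R f x) \<in> borel_measurable M"
    unfolding eq using fm by measurable
  show "\<And>n. (\<lambda>x. indicator {0..1} x *\<^sub>R s n x) \<in> borel_measurable M"
    unfolding eq using sm by measurable
  show "integrable M (\<lambda>x. B * indicator {0..1} x)"
    using A fin by (intro integrable_mult_right integrable_real_indicator)
  show "AE x in M. (\<lambda>n. indicator {0..1} x *\<^sub>R s n x) \<longlonglongrightarrow> indicator {0..1} x *\<^sub>R f x"
    by (rule AE_I2) (auto simp: indicator_def lim)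
  show "\<And>n. AE x in M. norm (indicator {0..1} x *\<^sub>R s n x) \<le> B * indicator {0..1} x"
    by (rule AE_I2) (auto simp: indicator_def bd)
qed

lemma tele:
  fixes v :: "nat \<Rightarrow> real" and j :: nat
  shows "(\<Sum>k\<in>{1..j}. (v k - v (k - 1))) = v j - v 0"
  by (induction j) (auto simp: sum.cl_ivl_Suc)

definition vv :: "(real \<Rightarrow> real) \<Rightarrow> real \<Rightarrow> nat \<Rightarrow> nat \<Rightarrow> real" where
  "vv f B n k = (if k = 0 then -B else f (real k / real (Suc n)))"

definition Lseq :: "(real \<Rightarrow> real) \<Rightarrow> real \<Rightarrow> nat \<Rightarrow> real \<Rightarrow> real" where
  "Lseq f B n = (\<lambda>p. Cst (-B) p + (\<Sum>k\<in>{1..<Suc n}. (vv f B n k - vv f B n (k - 1)) * Ind (real k / real (Suc n)) p))"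

lemma Lseq_val:
  assumes p: "p \<in> {0<..1}"
  shows "Lseq f B n p = vv f B n (nat \<lceil>real (Suc n) * p\<rceil> - 1)"
proof -
  define N where "N = Suc n"
  define c where "c = \<lceil>real N * p\<rceil>"
  define j where "j = nat c - 1"
  have Np: "0 < real N * p" "real N * p \<le> real N" using p unfolding N_def by (auto simp: mult_le_cancel_left1)
  have c1: "1 \<le> c" unfolding c_def using Np by (simp add: le_ceiling_iff)
  have cN: "c \<le> int N" unfolding c_def using Np by (simp add: ceiling_le_iff)
  have jN: "j < N" using c1 cN unfolding j_def by linarith
  have iff: "real k / real N < p \<longleftrightarrow> k \<le> j" if "k \<ge> 1" for k
  proof -
    have "real k / real N < p \<longleftrightarrow> real k < real N * p" unfolding N_def by (simp add: divide_less_eq mult.commute)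
    also have "\<dots> \<longleftrightarrow> int k < c" unfolding c_def by (simp add: less_ceiling_iff)
    also have "\<dots> \<longleftrightarrow> k \<le> j" unfolding j_def using c1 by linarith
    finally show ?thesis .
  qed
  let ?d = "\<lambda>k. vv f B n k - vv f B n (k - 1)"
  have "(\<Sum>k\<in>{1..<N}. ?d k * Ind (real k / real N) p) = (\<Sum>k\<in>{1..<N}. if k \<in> {..j} then ?d k else 0)"
    by (rule sum.cong) (use p iff in \<open>auto simp: Ind_def\<close>)
  also have "\<dots> = (\<Sum>k\<in>{1..<N} \<inter> {..j}. ?d k)"
    by (rule sum.inter_restrict[symmetric]) simp
  also have "{1..<N} \<inter> {..j} = {1..j}" using jN by auto
  also have "(\<Sum>k\<in>{1..j}. ?d k) = vv f B n j - vv f B n 0" by (rule tele)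
  finally show ?thesis using p unfolding Lseq_def N_def[symmetric] j_def c_def
    by (simp add: Cst_def vv_def)
qed

lemma Lseq_bound:
  assumes B: "\<And>p. \<bar>f p\<bar> \<le> B" and f: "f \<in> Qb"
  shows "\<bar>Lseq f B n p\<bar> \<le> B"
proof (cases "p \<in> {0<..1}")
  case True
  have "B \<ge> 0" using B[of 0] by simp
  then show ?thesis unfolding Lseq_val[OF True] vv_def using B by auto
next
  case False
  then have "Lseq f B n p = 0" by (auto simp: Lseq_def Cst_def Ind_def)
  then show ?thesis using B[of 0] by simp
qed

lemma Lseq_zero: "p \<notin> {0<..1} \<Longrightarrow> Lseq f B n p = 0"
  by (auto simp: Lseq_def Cst_def Ind_def)

lemma Lseq_coef_nonneg:
  assumes B: "\<And>p. \<bar>f p\<bar> \<le> B" and f: "f \<in> Qb" and k: "k \<in> {1..<Suc n}"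
  shows "vv f B n k - vv f B n (k - 1) \<ge> 0"
proof (cases "k = 1")
  case True
  then show ?thesis unfolding vv_def using B[of "1 / real (Suc n)"] by auto
next
  case False
  then have k2: "k \<ge> 2" "k < Suc n" using k by auto
  have "f (real (k - 1) / real (Suc n)) \<le> f (real k / real (Suc n))"
    by (rule QbD(2)[OF f]) (use k2 in \<open>auto simp: divide_le_eq_1 frac_le\<close>)
  then show ?thesis using k2 unfolding vv_def by auto
qed

lemma Lseq_lim:
  assumes f: "f \<in> Qb" and p: "p \<in> {0<..1}"
  shows "(\<lambda>n. Lseq f B n p) \<longlonglongrightarrow> f p"
proof -
  define q where "q n = (real_of_int \<lceil>real (Suc n) * p\<rceil> - 1) / real (Suc n)" for n
  have qlt: "q n < p" for n
  proof -
    have "real_of_int \<lceil>real (Suc n) * p\<rceil> - 1 < real (Suc n) * p" using ceiling_correct by blast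
    then show ?thesis unfolding q_def by (simp add: divide_less_eq mult.commute)
  qed
  have qge: "p - 1 / real (Suc n) \<le> q n" for n
  proof -
    have "real (Suc n) * p \<le> real_of_int \<lceil>real (Suc n) * p\<rceil>" using ceiling_correct by blast
    then have "real (Suc n) * p - 1 \<le> real_of_int \<lceil>real (Suc n) * p\<rceil> - 1" by simp
    then have "(real (Suc n) * p - 1) / real (Suc n) \<le> q n" unfolding q_def by (simp add: divide_right_mono)
    moreover have "(real (Suc n) * p - 1) / real (Suc n) = p - 1 / real (Suc n)" by (simp add: field_simps)
    ultimately show ?thesis by simp
  qed
  have ql: "q \<longlonglongrightarrow> p"
  proof (rule tendsto_sandwich[of "\<lambda>n. p - 1 / real (Suc n)" q sequentially "\<lambda>n. p"])
    show "eventually (\<lambda>n. p - 1 / real (Suc n) \<le> q n) sequentially" using qge by simp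
    show "eventually (\<lambda>n. q n \<le> p) sequentially" using qlt by (simp add: less_imp_le)
    have "(\<lambda>n. 1 / (real n + 1)) \<longlonglongrightarrow> 0" by (rule inv_lim)
    then have "(\<lambda>n. p - 1 / (real n + 1)) \<longlonglongrightarrow> p - 0" by (intro tendsto_intros)
    then show "(\<lambda>n. p - 1 / real (Suc n)) \<longlonglongrightarrow> p" by (simp add: add.commute)
  qed simp
  have "filterlim q (at_left p) sequentially"
    by (rule tendsto_imp_filterlim_at_left[OF ql]) (use qlt in simp)
  from filterlim_compose[OF QbD(3)[OF f p] this]
  have fq: "(\<lambda>n. f (q n)) \<longlonglongrightarrow> f p" .
  obtain M :: nat where M: "1 / p < real M" using reals_Archimedean2 by blast
  have ev: "eventually (\<lambda>n. Lseq f B n p = f (q n)) sequentially"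
    unfolding eventually_sequentially
  proof (intro exI[of _ M] allI impI)
    fix n assume nM: "M \<le> n"
    have "1 / p < real (Suc n)" using M nM by linarith
    then have gt: "1 < real (Suc n) * p" using p by (simp add: divide_less_eq mult.commute)
    have c2: "2 \<le> \<lceil>real (Suc n) * p\<rceil>" using gt by (simp add: le_ceiling_iff)
    have "Lseq f B n p = vv f B n (nat \<lceil>real (Suc n) * p\<rceil> - 1)" by (rule Lseq_val[OF p])
    also have "\<dots> = f (real (nat \<lceil>real (Suc n) * p\<rceil> - 1) / real (Suc n))"
      unfolding vv_def using c2 by auto
    also have "real (nat \<lceil>real (Suc n) * p\<rceil> - 1) = real_of_int \<lceil>real (Suc n) * p\<rceil> - 1"
    proof -
      have c1: "1 \<le> nat \<lceil>real (Suc n) * p\<rceil>" using c2 by (simp add: le_nat_iff le_ceiling_iff)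
      have "int (nat \<lceil>real (Suc n) * p\<rceil> - 1) = int (nat \<lceil>real (Suc n) * p\<rceil>) - 1"
        using c1 by (simp add: of_nat_diff)
      also have "int (nat \<lceil>real (Suc n) * p\<rceil>) = \<lceil>real (Suc n) * p\<rceil>" using c2 by simp
      finally have "int (nat \<lceil>real (Suc n) * p\<rceil> - 1) = \<lceil>real (Suc n) * p\<rceil> - 1" .
      then have "real_of_int (int (nat \<lceil>real (Suc n) * p\<rceil> - 1)) = real_of_int (\<lceil>real (Suc n) * p\<rceil> - 1)" by simp
      then show ?thesis by simp
    qed
    finally show "Lseq f B n p = f (q n)" unfolding q_def .
  qed
  show ?thesis by (rule Lim_transform_eventually[OF fq]) (use ev in \<open>auto elim: eventually_mono\<close>)
qed


context pref_nd
begin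

abbreviation mu where "mu \<equiv> interval_measure w"

lemma w_rc: "continuous (at_right a) w"
  using w_cont[of a] by (rule continuous_at_imp_continuous_at_within)

lemma mu_Ioc: "a \<le> b \<Longrightarrow> emeasure mu {a<..b} = w b - w a"
  by (rule emeasure_interval_measure_Ioc) (auto intro: w_mono w_rc)

lemma mu_Ioc': "a \<le> b \<Longrightarrow> measure mu {a<..b} = w b - w a"
  by (rule measure_interval_measure_Ioc) (auto intro: w_mono w_rc)

lemma mu_fin: "emeasure mu {0..1} < \<infinity>"
proof -
  have "emeasure mu {0..1} \<le> emeasure mu {-1<..1}"
    by (rule emeasure_mono) auto
  also have "\<dots> = ennreal (w 1 - w (-1))" by (rule mu_Ioc) simp
  finally show ?thesis using order_le_less_trans by fastforce
qed

lemma meas_mu: "borel_measurable mu = borel_measurable borel"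
  by (rule measurable_cong_sets) simp_all

definition ST :: "(real \<Rightarrow> real) \<Rightarrow> real" where "ST f = (LINT p:{0..1}|mu. f p)"

lemma ST_int:
  assumes f: "f \<in> Qb"
  shows "set_integrable mu {0..1} f"
proof -
  obtain B where B: "\<forall>p. \<bar>f p\<bar> \<le> B" using QbD(1)[OF f] by blast
  show ?thesis unfolding set_integrable_def
  proof (rule integrableI_bounded_set_indicator[where B=B])
    show "f \<in> borel_measurable mu" unfolding meas_mu by (rule Qb_measurable[OF f])
  qed (use mu_fin B in auto)
qed

lemma ST_add: "f \<in> Qb \<Longrightarrow> g \<in> Qb \<Longrightarrow> ST (\<lambda>p. f p + g p) = ST f + ST g"
  unfolding ST_def by (rule set_integral_add(2)[OF ST_int ST_int])

lemma ST_scal: "ST (\<lambda>p. t * f p) = t * ST f"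
  unfolding ST_def by (rule set_integral_mult_right)

lemma ST_sum:
  "finite K \<Longrightarrow> (\<And>k. k \<in> K \<Longrightarrow> f k \<in> Qb) \<Longrightarrow> ST (\<lambda>p. \<Sum>k\<in>K. f k p) = (\<Sum>k\<in>K. ST (f k))"
proof (induction K rule: finite_induct)
  case empty
  then show ?case by (simp add: ST_def)
next
  case (insert x F)
  then show ?case by (simp add: ST_add sum_Qb)
qed

lemma ST_Cst: "ST (Cst c) = c"
proof -
  have "ST (Cst c) = integral\<^sup>L mu (\<lambda>p. c * indicator {0<..1} p)"
    unfolding ST_def set_lebesgue_integral_def
    by (rule Bochner_Integration.integral_cong) (auto simp: Cst_def indicator_def)
  also have "\<dots> = c * measure mu {0<..1}" by simp
  also have "measure mu {0<..1} = 1" using mu_Ioc'[of 0 1] by (simp add: w_low w_high)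
  finally show ?thesis by simp
qed

lemma ST_Ind: "ST (Ind a) = 1 - w a"
proof -
  have "ST (Ind a) = integral\<^sup>L mu (indicator {max 0 a<..1})"
    unfolding ST_def set_lebesgue_integral_def
    by (rule Bochner_Integration.integral_cong) (auto simp: Ind_def indicator_def)
  also have "\<dots> = measure mu {max 0 a<..1}" by simp
  also have "\<dots> = 1 - w a"
  proof (cases "a < 1")
    case True
    then have "measure mu {max 0 a<..1} = w 1 - w (max 0 a)" by (intro mu_Ioc') simp
    then show ?thesis using True by (cases "a \<le> 0") (auto simp: w_low w_high max_def)
  next
    case False
    then show ?thesis by (simp add: w_high)
  qed
  finally show ?thesis .
qed

lemma gen:
  fixes c :: real and a :: "nat \<Rightarrow> real" and lam :: "nat \<Rightarrow> real" and K :: "nat set"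
  assumes K: "finite K" and lam: "\<And>k. k \<in> K \<Longrightarrow> lam k \<ge> 0"
  defines "G \<equiv> (\<lambda>p. Cst c p + (\<Sum>k\<in>K. lam k * Ind (a k) p))"
  shows "G \<in> Qb" "CE G = ST G"
proof -
  have sQ: "(\<lambda>p. \<Sum>k\<in>K. lam k * Ind (a k) p) \<in> Qb"
    using K lam by (intro sum_Qb scal_Qb Ind_Qb) auto
  show GQ: "G \<in> Qb" unfolding G_def by (intro add_Qb Cst_Qb sQ)
  have "(\<Sum>k\<in>K. CE (\<lambda>p. lam k * Ind (a k) p)) = (\<Sum>k\<in>K. lam k * (1 - w (a k)))"
    by (rule sum.cong) (simp_all add: CE_scal[OF Ind_Qb] lam w_def)
  moreover have "CE (\<lambda>p. \<Sum>k\<in>K. lam k * Ind (a k) p) = (\<Sum>k\<in>K. CE (\<lambda>p. lam k * Ind (a k) p))"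
    by (rule CE_sum[OF K, of "\<lambda>k p. lam k * Ind (a k) p"]) (rule scal_Qb[OF Ind_Qb lam])
  ultimately have "CE G = c + (\<Sum>k\<in>K. lam k * (1 - w (a k)))"
    unfolding G_def CE_add[OF Cst_Qb sQ] CE_Cst by simp
  moreover have "ST G = c + (\<Sum>k\<in>K. lam k * (1 - w (a k)))"
  proof -
    have "ST (\<lambda>p. \<Sum>k\<in>K. lam k * Ind (a k) p) = (\<Sum>k\<in>K. ST (\<lambda>p. lam k * Ind (a k) p))"
      by (rule ST_sum[OF K, of "\<lambda>k p. lam k * Ind (a k) p"]) (rule scal_Qb[OF Ind_Qb lam])
    also have "\<dots> = (\<Sum>k\<in>K. lam k * (1 - w (a k)))"
      by (rule sum.cong) (simp_all add: ST_scal ST_Ind)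
    finally show ?thesis unfolding G_def ST_add[OF Cst_Qb sQ] ST_Cst by simp
  qed
  ultimately show "CE G = ST G" by simp
qed

lemma CE_ST:
  assumes f: "f \<in> Qb"
  shows "CE f = ST f"
proof -
  obtain B0 where B0: "\<forall>p. \<bar>f p\<bar> \<le> B0" using QbD(1)[OF f] by blast
  define B where "B = max B0 0"
  have B: "\<And>p. \<bar>f p\<bar> \<le> B" using B0 unfolding B_def by (auto intro: order_trans)
  have Lg: "Lseq f B n \<in> Qb \<and> CE (Lseq f B n) = ST (Lseq f B n)" for n
  proof -
    have c: "\<And>k. k \<in> {1..<Suc n} \<Longrightarrow> vv f B n k - vv f B n (k - 1) \<ge> 0"
      by (rule Lseq_coef_nonneg[OF B f])
    show ?thesis
      using gen[of "{1..<Suc n}" "\<lambda>k. vv f B n k - vv f B n (k - 1)" "-B" "\<lambda>k. real k / real (Suc n)"] c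
      unfolding Lseq_def by auto
  qed
  have LQ: "\<And>n. Lseq f B n \<in> Qb" using Lg by blast
  have pt: "(\<lambda>n. Lseq f B n x) \<longlonglongrightarrow> f x" if "x \<in> {0..1}" for x
  proof (cases "x \<in> {0<..1}")
    case True then show ?thesis by (rule Lseq_lim[OF f])
  next
    case False then show ?thesis by (simp add: Lseq_zero QbD(4)[OF f])
  qed
  have l1: "(\<lambda>n. L1dist f (Lseq f B n)) \<longlonglongrightarrow> 0"
  proof -
    have "(\<lambda>n. LINT x:{0..1}|lborel. \<bar>f x - Lseq f B n x\<bar>) \<longlonglongrightarrow> (LINT x:{0..1}|lborel. (\<lambda>x::real. 0::real) x)"
    proof (rule dc01[of lborel "\<lambda>n x. \<bar>f x - Lseq f B n x\<bar>" "\<lambda>x. 0" "2*B"])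
      show "emeasure lborel {0..1::real} < \<infinity>" by simp
      show "\<And>n. (\<lambda>x. \<bar>f x - Lseq f B n x\<bar>) \<in> borel_measurable borel"
        using Qb_measurable[OF f] Qb_measurable[OF LQ] by measurable
      fix n x
      show "\<bar>\<bar>f x - Lseq f B n x\<bar>\<bar> \<le> 2 * B"
        using B[of x] Lseq_bound[OF B f, of n x] by simp
    next
      fix x :: real assume "x \<in> {0..1}"
      from pt[OF this] have "(\<lambda>n. \<bar>f x - Lseq f B n x\<bar>) \<longlonglongrightarrow> \<bar>f x - f x\<bar>"
        by (intro tendsto_intros)
      then show "(\<lambda>n. \<bar>f x - Lseq f B n x\<bar>) \<longlonglongrightarrow> 0" by simp
    qed auto
    then show ?thesis by (simp add: L1dist_lebesgue[OF f LQ])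
  qed
  have c1: "(\<lambda>n. CE (Lseq f B n)) \<longlonglongrightarrow> CE f" by (rule CE_cont[OF f LQ l1])
  have c2: "(\<lambda>n. ST (Lseq f B n)) \<longlonglongrightarrow> ST f"
    unfolding ST_def
  proof (rule dc01[where B=B])
    show "sets mu = sets borel" by simp
    show "emeasure mu {0..1} < \<infinity>" by (rule mu_fin)
    show "\<And>n. Lseq f B n \<in> borel_measurable borel" by (rule Qb_measurable[OF LQ])
    show "f \<in> borel_measurable borel" by (rule Qb_measurable[OF f])
    show "\<And>n x. \<bar>Lseq f B n x\<bar> \<le> B" by (rule Lseq_bound[OF B f])
  qed (rule pt)
  have "(\<lambda>n. CE (Lseq f B n)) \<longlonglongrightarrow> ST f" using c2 Lg by simp
  with c1 show ?thesis by (rule LIMSEQ_unique)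
qed

lemma stieltjes_ST: "stieltjes01 w f = ST f"
proof -
  have "(\<lambda>x. w (max 0 (min 1 x))) = w" by (rule ext) (rule w_clamp)
  then show ?thesis unfolding stieltjes01_def ST_def by simp
qed

lemma final:
  "\<exists>w :: real \<Rightarrow> real. bounded (w ` {0..1}) \<and> mono_on {0..1} w \<and> continuous_on {0..1} w \<and>
           numerical_representation Qb R (stieltjes01 w)"
proof (intro exI[of _ w] conjI)
  show "bounded (w ` {0..1})"
    unfolding bounded_iff
  proof (intro exI[of _ 1] ballI)
    fix y assume "y \<in> w ` {0..1}"
    then obtain x where x: "x \<in> {0..1}" "y = w x" by blast
    have "w 0 \<le> w x" "w x \<le> w 1" using x by (auto intro: w_mono)
    then show "norm y \<le> 1" using x by (simp add: w_low w_high)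
  qed
  show "mono_on {0..1} w" by (auto simp: mono_on_def intro: w_mono)
  show "continuous_on {0..1} w" by (rule continuous_at_imp_continuous_on) (auto intro: w_cont)
  show "numerical_representation Qb R (stieltjes01 w)"
    unfolding numerical_representation_def stieltjes_ST
    by (auto simp: CE_rep CE_ST[symmetric])
qed

end

context pref
begin

lemma degenerate:
  assumes nnd: "\<not> nondeg"
  shows "\<exists>w :: real \<Rightarrow> real. bounded (w ` {0..1}) \<and> mono_on {0..1} w \<and> continuous_on {0..1} w \<and>
           numerical_representation Qb R (stieltjes01 w)"
proof (intro exI[of _ "\<lambda>_. 0"] conjI)
  have "(\<lambda>_. 0::real) ` {0..1::real} = {0}" by (rule image_constant[of 0]) simp
  then show "bounded ((\<lambda>_. 0::real) ` {0..1::real})" by simp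
  show "mono_on {0..1} (\<lambda>_. 0::real)" by (simp add: mono_on_def)
  show "continuous_on {0..1} (\<lambda>_. 0::real)" by simp
  have all: "R f g" if f: "f \<in> Qb" and g: "g \<in> Qb" for f g
  proof -
    obtain B1 where B1: "\<forall>p. \<bar>f p\<bar> \<le> B1" using QbD(1)[OF f] by blast
    obtain B2 where B2: "\<forall>p. \<bar>g p\<bar> \<le> B2" using QbD(1)[OF g] by blast
    define B where "B = max B1 B2"
    have Bl: "\<And>p. -B \<le> f p" "\<And>p. g p \<le> B" using B1 B2 unfolding B_def abs_le_iff
      by (metis max.cobounded1 max.cobounded2 minus_le_iff order_trans)+
    have r1: "R f (Cst (-B))" by (rule monoR[OF f Cst_Qb]) (use Bl in \<open>auto simp: Cst_def\<close>)
    have r3: "R (Cst B) g" by (rule monoR[OF Cst_Qb g]) (use Bl in \<open>auto simp: Cst_def\<close>)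
    have r2: "R (Cst (-B)) (Cst B)"
    proof (rule ccontr)
      assume "\<not> R (Cst (-B)) (Cst B)"
      then have "S (Cst B) (Cst (-B))" using total[OF Cst_Qb Cst_Qb] unfolding strict_part_def by blast
      then show False using nnd unfolding nondeg_def by blast
    qed
    show ?thesis using trans[OF f Cst_Qb g r1 trans[OF Cst_Qb Cst_Qb g r2 r3]] .
  qed
  have z: "stieltjes01 (\<lambda>_. 0) f = 0" for f
  proof -
    have null: "{-1<..1::real} \<in> null_sets (interval_measure (\<lambda>x. 0))"
      by (rule null_setsI) (simp_all add: emeasure_interval_measure_Ioc)
    have "AE x in interval_measure (\<lambda>x. 0). indicator {0..1} x *\<^sub>R f x = 0"
      by (rule AE_I'[OF null]) (auto simp: indicator_def)
    then show ?thesis unfolding stieltjes01_def set_lebesgue_integral_def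
      by (simp add: integral_eq_zero_AE)
  qed
  show "numerical_representation Qb R (stieltjes01 (\<lambda>_. 0))"
    unfolding numerical_representation_def strict_part_def using all z by auto
qed

end

theorem mainTheorem11:
  fixes R :: "(real \<Rightarrow> real) \<Rightarrow> (real \<Rightarrow> real) \<Rightarrow> bool"
  assumes "total_preorder_on Qb R"
    and "monotonic_pref R"
    and "continuous_preorder L1top R"
    and "dual_independence R"
  shows "\<exists>w :: real \<Rightarrow> real. bounded (w ` {0..1}) \<and> mono_on {0..1} w \<and> continuous_on {0..1} w \<and>
           numerical_representation Qb R (stieltjes01 w)"
proof -
  interpret pref R using assms by (rule pref.intro)
  show ?thesis
  proof (cases nondeg)
    case True
    interpret pref_nd R by (rule pref_nd.intro, unfold_locales, rule True)
    show ?thesis by (rule final)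
  next
    case False
    then show ?thesis by (rule degenerate)
  qed
qed

end
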